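(* Let $\mathcal{G}$ be a hypergraph with at least one edge. Then $$\gamma(\mathcal{G})\ge 1-\frac{\lambda_{\max}(A_{\mathcal{G}})}{\lambda_{\min}(A_{\mathcal{G}})},$$ where $\lambda_{\max}(A_{\mathcal{G}})$ and $\lambda_{\min}(A_{\mathcal{G}})$ are the largest and smallest eigenvalues of $A_{\mathcal{G}}$.
   Context: A hypergraph $\mathcal{G}=(V,E)$ has a finite vertex set $V$ and a set $E$ of subsets of $V$ (edges), each of cardinality at least $2$. Two distinct vertices are adjacent if some edge contains both. The adjacency matrix $A_{\mathcal{G}}$ has $(A_{\mathcal{G}})_{ij}=\sum_{e\in E,\, i,j\in e}\frac{1}{|e|-1}$ for $i\ne j$ and zero diagonal. The strong chromatic number $\gamma(\mathcal{G})$ is the minimum number of colors in a coloring of the vertices in which any two adjacent vertices get different colors. *)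

theory Defs
  imports "Jordan_Normal_Form.Char_Poly"
begin

definition hypergraph :: "nat \<Rightarrow> nat set set \<Rightarrow> bool" where
  "hypergraph n E \<longleftrightarrow> (\<forall>e\<in>E. e \<subseteq> {..<n} \<and> card e \<ge> 2)"

definition hg_adjacent :: "nat set set \<Rightarrow> nat \<Rightarrow> nat \<Rightarrow> bool" where
  "hg_adjacent E i j \<longleftrightarrow> i \<noteq> j \<and> (\<exists>e\<in>E. i \<in> e \<and> j \<in> e)"

definition hg_adj_matrix :: "nat \<Rightarrow> nat set set \<Rightarrow> real mat" where
  "hg_adj_matrix n E = mat n n (\<lambda>(i, j). if i = j then 0
      else (\<Sum>e\<in>{e\<in>E. i \<in> e \<and> j \<in> e}. 1 / (real (card e) - 1)))"

definition strong_chromatic_number :: "nat \<Rightarrow> nat set set \<Rightarrow> nat" where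
  "strong_chromatic_number n E = (LEAST k. \<exists>c :: nat \<Rightarrow> nat.
      (\<forall>i<n. c i < k) \<and> (\<forall>i<n. \<forall>j<n. hg_adjacent E i j \<longrightarrow> c i \<noteq> c j))"

definition lambda_max :: "real mat \<Rightarrow> real" where
  "lambda_max A = Max {k. eigenvalue A k}"

definition lambda_min :: "real mat \<Rightarrow> real" where
  "lambda_min A = Min {k. eigenvalue A k}"

end

theory Submission
  imports Defs "HOL-Analysis.Function_Topology" "Jordan_Normal_Form.Spectral_Radius"
begin


definition qf :: "nat \<Rightarrow> (nat \<Rightarrow> nat \<Rightarrow> real) \<Rightarrow> (nat \<Rightarrow> real) \<Rightarrow> (nat \<Rightarrow> real) \<Rightarrow> real" where
  "qf n a u v = (\<Sum>i<n. \<Sum>j<n. a i j * u i * v j)"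

definition nsq :: "nat \<Rightarrow> (nat \<Rightarrow> real) \<Rightarrow> real" where
  "nsq n z = (\<Sum>i<n. (z i)^2)"

lemma cont_Q: "continuous_on UNIV (\<lambda>z::nat\<Rightarrow>real. qf n a z z)"
  unfolding qf_def by (intro continuous_intros continuous_on_product_coordinates)

lemma cont_N: "continuous_on UNIV (\<lambda>z::nat\<Rightarrow>real. nsq n z)"
  unfolding nsq_def by (intro continuous_intros continuous_on_product_coordinates)

lemma compact_S: "compact ((Pi\<^sub>E UNIV (\<lambda>_::nat. {-1..1::real})) \<inter> {z. nsq n z = 1})"
proof (rule compact_Int_closed)
  show "compact (Pi\<^sub>E UNIV (\<lambda>_::nat. {-1..1::real}))"
    using compactin_PiE[of "\<lambda>_. euclidean" UNIV "\<lambda>_. {-1..1::real}"]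
    by (simp add: euclidean_product_topology)
  show "closed {z::nat\<Rightarrow>real. nsq n z = 1}"
    using closed_Collect_eq[OF cont_N continuous_on_const] by simp
qed

lemma qf_expand: "qf n a (\<lambda>i. y i + t * u i) (\<lambda>i. y i + t * u i)
   = qf n a y y + t * (qf n a y u + qf n a u y) + t^2 * qf n a u u"
  unfolding qf_def by (simp add: algebra_simps sum.distrib sum_distrib_left power2_eq_square)

lemma nsq_expand: "nsq n (\<lambda>i. y i + t * u i) = nsq n y + 2 * t * (\<Sum>i<n. y i * u i) + t^2 * nsq n u"
  unfolding nsq_def by (simp add: algebra_simps sum.distrib sum_distrib_left power2_eq_square)

lemma times_if01: "(x::real) * (if P then 1 else 0) = (if P then x else 0)"
  "(if P then 1 else 0) * (x::real) = (if P then x else 0)" by simp_all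

lemma quad_zero:
  fixes b c :: real
  assumes "\<forall>t. 2 * t * b + t^2 * c \<ge> 0"
  shows "b = 0"
proof (rule ccontr)
  assume b: "b \<noteq> 0"
  define D where "D = \<bar>c\<bar> + 1"
  have d: "D > 0" "D \<noteq> 0" "c \<le> D" unfolding D_def by auto
  define t where "t = - b / (2 * D)"
  have "2 * t * b = - (b^2) / D" unfolding t_def using d by (simp add: field_simps power2_eq_square)
  moreover have "t^2 * c \<le> b^2 / (4 * D)"
  proof -
    have "t^2 * c \<le> t^2 * D" using d by (intro mult_left_mono) auto
    also have "\<dots> = b^2 / (4 * D)" unfolding t_def using d by (simp add: field_simps power2_eq_square)
    finally show ?thesis .
  qed
  moreover have "b^2 > 0" using b by simp
  moreover have "- (b^2) / D + b^2 / (4 * D) < 0"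
  proof -
    have "- (b^2) / D + b^2 / (4 * D) = - (3 * b^2) / (4 * D)" using d by (simp add: field_simps)
    also have "\<dots> < 0" using d \<open>b^2 > 0\<close> by (simp add: divide_pos_pos)
    finally show ?thesis .
  qed
  ultimately have "2 * t * b + t^2 * c < 0" by linarith
  with assms show False by (metis not_le)
qed

lemma spectral_min:
  fixes a :: "nat \<Rightarrow> nat \<Rightarrow> real"
  assumes sym: "\<And>i j. i < n \<Longrightarrow> j < n \<Longrightarrow> a i j = a j i" and n: "n > 0"
  shows "\<exists>\<mu> y. nsq n y = 1 \<and> (\<forall>i<n. (\<Sum>j<n. a i j * y j) = \<mu> * y i)
            \<and> (\<forall>z. qf n a z z \<ge> \<mu> * nsq n z)"
proof -
  define S where "S = (Pi\<^sub>E UNIV (\<lambda>_::nat. {-1..1::real})) \<inter> {z. nsq n z = 1}"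
  have "(\<Sum>i<n. (if i = 0 then 1 else 0::real)^2) = (\<Sum>i<n. if i = 0 then 1 else 0)"
    by (rule sum.cong) auto
  then have "(\<lambda>i. if i = 0 then 1 else 0::real) \<in> S"
    unfolding S_def nsq_def using n by auto
  hence "S \<noteq> {}" by auto
  from continuous_attains_inf[OF compact_S[of n, folded S_def] this
        continuous_on_subset[OF cont_Q[of n a]]]
  obtain y where yS: "y \<in> S" and ymin: "\<And>z. z \<in> S \<Longrightarrow> qf n a y y \<le> qf n a z z" by auto
  define \<mu> where "\<mu> = qf n a y y"
  have bound: "qf n a z z \<ge> \<mu> * nsq n z" for z
  proof (cases "nsq n z = 0")
    case True
    have "\<forall>i<n. z i = 0"
      using True unfolding nsq_def by (subst (asm) sum_nonneg_eq_0_iff) auto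
    then have "qf n a z z = 0" unfolding qf_def by simp
    then show ?thesis using True by simp
  next
    case False
    define N where "N = nsq n z"
    have Npos: "N > 0" using False unfolding N_def nsq_def by (simp add: sum_nonneg order_le_neq_trans)
    define w where "w = (\<lambda>i. if i < n then z i / sqrt N else 0)"
    have nw: "nsq n w = 1"
    proof -
      have "nsq n w = (\<Sum>i<n. (z i)^2 / N)" unfolding nsq_def w_def using Npos
        by (intro sum.cong) (auto simp: power_divide)
      also have "\<dots> = 1" using Npos unfolding N_def nsq_def by (simp add: sum_divide_distrib[symmetric])
      finally show ?thesis .
    qed
    have "\<bar>w i\<bar> \<le> 1" for i
    proof (cases "i < n")
      case True
      have "(w i)^2 \<le> nsq n w" unfolding nsq_def
        using True by (intro member_le_sum) auto
      then have "(w i)^2 \<le> 1" using nw by simp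
      then show ?thesis using abs_square_le_1 by blast
    qed (simp add: w_def)
    then have "w \<in> S" using nw unfolding S_def by (auto simp: abs_le_iff)
    then have "\<mu> \<le> qf n a w w" using ymin \<mu>_def by auto
    also have "qf n a w w = qf n a z z / N"
    proof -
      have "qf n a w w = (\<Sum>i<n. \<Sum>j<n. a i j * z i * z j / (sqrt N * sqrt N))"
        unfolding qf_def w_def by (intro sum.cong refl) simp
      also have "\<dots> = qf n a z z / (sqrt N * sqrt N)" unfolding qf_def
        by (simp add: sum_divide_distrib)
      also have "sqrt N * sqrt N = N" using Npos by simp
      finally show ?thesis .
    qed
    finally have "\<mu> \<le> qf n a z z / N" .
    then have "\<mu> * N \<le> qf n a z z" using Npos by (simp add: pos_le_divide_eq)
    then show ?thesis unfolding N_def .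
  qed
  have eig: "(\<Sum>j<n. a k j * y j) = \<mu> * y k" if k: "k < n" for k
  proof -
    define u where "u = (\<lambda>i. if i = k then 1 else 0::real)"
    have yn: "nsq n y = 1" using yS unfolding S_def by auto
    have uu: "qf n a u u = a k k"
    proof -
      have "qf n a u u = (\<Sum>i<n. if i = k then (\<Sum>j<n. if j = k then a k k else 0) else 0)"
        unfolding qf_def u_def by (intro sum.cong refl) (auto simp: times_if01 intro!: sum.cong)
      then show ?thesis using k by simp
    qed
    have uy: "qf n a u y = (\<Sum>j<n. a k j * y j)"
    proof -
      have "qf n a u y = (\<Sum>i<n. if i = k then (\<Sum>j<n. a k j * y j) else 0)"
        unfolding qf_def u_def by (intro sum.cong refl) (auto simp: times_if01 intro!: sum.cong)
      then show ?thesis using k by simp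
    qed
    have yu: "qf n a y u = (\<Sum>j<n. a k j * y j)"
    proof -
      have "qf n a y u = (\<Sum>i<n. a i k * y i)"
        unfolding qf_def u_def using k by (intro sum.cong refl) (simp add: times_if01)
      also have "\<dots> = (\<Sum>j<n. a k j * y j)" by (rule sum.cong[OF refl]) (metis sym k lessThan_iff)
      finally show ?thesis .
    qed
    have nu: "nsq n u = 1"
    proof -
      have "nsq n u = (\<Sum>i<n. if i = k then 1 else 0)"
        unfolding nsq_def u_def by (intro sum.cong refl) auto
      then show ?thesis using k by simp
    qed
    have yuu: "(\<Sum>i<n. y i * u i) = y k"
    proof -
      have "(\<Sum>i<n. y i * u i) = (\<Sum>i<n. if i = k then y k else 0)"
        unfolding u_def by (intro sum.cong refl) auto
      then show ?thesis using k by simp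
    qed
    have "\<forall>t. 2 * t * ((\<Sum>j<n. a k j * y j) - \<mu> * y k) + t^2 * (a k k - \<mu>) \<ge> 0"
    proof
      fix t
      have "qf n a (\<lambda>i. y i + t * u i) (\<lambda>i. y i + t * u i) \<ge> \<mu> * nsq n (\<lambda>i. y i + t * u i)"
        by (rule bound)
      then show "2 * t * ((\<Sum>j<n. a k j * y j) - \<mu> * y k) + t^2 * (a k k - \<mu>) \<ge> 0"
        unfolding qf_expand nsq_expand uu uy yu nu yuu yn \<mu>_def[symmetric]
        by (simp only: algebra_simps)
    qed
    from quad_zero[OF this] show ?thesis by simp
  qed
  have yn: "nsq n y = 1" using yS unfolding S_def by auto
  show ?thesis
  proof (intro exI conjI allI impI)
    show "nsq n y = 1" by (rule yn)
    show "(\<Sum>j<n. a i j * y j) = \<mu> * y i" if "i < n" for i using eig that by blast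
    show "qf n a z z \<ge> \<mu> * nsq n z" for z by (rule bound)
  qed
qed


lemma qf_sym:
  assumes sym: "\<And>i j. i < n \<Longrightarrow> j < n \<Longrightarrow> a i j = a j i"
  shows "qf n a u v = qf n a v u"
proof -
  have "qf n a u v = (\<Sum>j<n. \<Sum>i<n. a i j * u i * v j)" unfolding qf_def by (rule sum.swap)
  also have "\<dots> = qf n a v u" unfolding qf_def
    by (intro sum.cong refl) (metis sym lessThan_iff mult.commute mult.assoc)
  finally show ?thesis .
qed

lemma qf_eig:
  assumes "\<forall>i<n. (\<Sum>j<n. a i j * x j) = l * x i"
  shows "qf n a w x = l * (\<Sum>i<n. w i * x i)"
proof -
  have "qf n a w x = (\<Sum>i<n. w i * (\<Sum>j<n. a i j * x j))" unfolding qf_def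
    by (simp add: sum_distrib_left mult_ac)
  also have "\<dots> = (\<Sum>i<n. w i * (l * x i))" using assms by (intro sum.cong refl) simp
  also have "\<dots> = l * (\<Sum>i<n. w i * x i)" by (simp add: sum_distrib_left mult_ac)
  finally show ?thesis .
qed

lemma nsq_nonneg: "nsq n z \<ge> 0" unfolding nsq_def by (simp add: sum_nonneg)

lemma key_ineq:
  assumes sym: "\<And>i j. i < n \<Longrightarrow> j < n \<Longrightarrow> a i j = a j i"
    and bnd: "\<And>z. qf n a z z \<ge> \<mu> * nsq n z"
    and eig: "\<forall>i<n. (\<Sum>j<n. a i j * x j) = l * x i"
    and X: "nsq n x > 0"
  shows "qf n a z z - \<mu> * nsq n z \<ge> (l - \<mu>) * (\<Sum>i<n. z i * x i)^2 / nsq n x"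
proof -
  define X where "X = nsq n x"
  define s where "s = (\<Sum>i<n. z i * x i)"
  define al where "al = s / X"
  define w where "w = (\<lambda>i. z i - al * x i)"
  have zw: "(\<lambda>i. w i + al * x i) = z" unfolding w_def by auto
  have wx: "(\<Sum>i<n. w i * x i) = 0"
  proof -
    have "(\<Sum>i<n. w i * x i) = s - al * X" unfolding w_def s_def X_def nsq_def
      by (simp add: algebra_simps sum_subtractf sum_distrib_left power2_eq_square)
    also have "\<dots> = 0" unfolding al_def using X X_def by simp
    finally show ?thesis .
  qed
  have q1: "qf n a w x = 0" using qf_eig[OF eig, where w=w] wx by simp
  have q2: "qf n a x w = 0" using q1 qf_sym[OF sym, where u=x and v=w] by simp
  have q3: "qf n a x x = l * X" using qf_eig[OF eig, where w=x] unfolding X_def nsq_def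
    by (simp add: power2_eq_square)
  have "qf n a z z = qf n a w w + al^2 * (l * X)"
    using qf_expand[of n a w al x] q1 q2 q3 unfolding zw by simp
  moreover have "nsq n z = nsq n w + al^2 * X"
    using nsq_expand[of n w al x] wx unfolding zw X_def by simp
  moreover have "qf n a w w \<ge> \<mu> * nsq n w" by (rule bnd)
  ultimately have "qf n a z z - \<mu> * nsq n z \<ge> al^2 * X * (l - \<mu>)"
    by (simp add: algebra_simps)
  also have "al^2 * X * (l - \<mu>) = (l - \<mu>) * s^2 / X" unfolding al_def using X X_def
    by (simp add: power2_eq_square field_simps)
  finally show ?thesis unfolding s_def X_def .
qed

lemma qf_delta:
  assumes "p < n" "q < n"
  shows "qf n a (\<lambda>i. if i = p then 1 else 0) (\<lambda>i. if i = q then 1 else 0) = a p q"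
proof -
  have "qf n a (\<lambda>i. if i = p then 1 else 0) (\<lambda>i. if i = q then 1 else 0)
      = (\<Sum>i<n. if i = p then (\<Sum>j<n. if j = q then a p q else 0) else 0)"
    unfolding qf_def by (intro sum.cong refl) (auto simp: times_if01 intro!: sum.cong)
  then show ?thesis using assms by simp
qed

lemma mat_vec_sum:
  assumes "A \<in> carrier_mat n n" "v \<in> carrier_vec n" "i < n"
  shows "(A *\<^sub>v v) $ i = (\<Sum>j<n. A $$ (i, j) * v $ j)"
  using assms by (simp add: scalar_prod_def lessThan_atLeast0)

lemma spectral_facts:
  fixes A :: "real mat"
  assumes A: "A \<in> carrier_mat n n" and n: "n > 0"
    and sym0: "\<forall>i<n. \<forall>j<n. A $$ (i, j) = A $$ (j, i)"
  shows "(\<forall>z. qf n (\<lambda>i j. A $$ (i, j)) z z \<ge> lambda_min A * nsq n z)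
     \<and> (\<exists>x. nsq n x > 0 \<and> (\<forall>i<n. (\<Sum>j<n. A $$ (i, j) * x j) = lambda_max A * x i))"
proof -
  have sym: "A $$ (i, j) = A $$ (j, i)" if "i < n" "j < n" for i j using sym0 that by blast
  define a where "a = (\<lambda>i j. A $$ (i, j))"
  obtain \<mu> y where yn: "nsq n y = 1" and yeig: "\<forall>i<n. (\<Sum>j<n. a i j * y j) = \<mu> * y i"
    and bnd: "\<forall>z. qf n a z z \<ge> \<mu> * nsq n z"
    using spectral_min[of n a] sym n unfolding a_def by blast
  define Ev where "Ev = {k. eigenvalue A k}"
  have fin: "finite Ev" using card_finite_spectrum(1)[OF A] unfolding Ev_def spectrum_def by simp
  have ev_vec: "\<exists>x. nsq n x > 0 \<and> (\<forall>i<n. (\<Sum>j<n. a i j * x j) = k * x i)" if "k \<in> Ev" for k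
  proof -
    from that obtain v where v: "eigenvector A v k" unfolding Ev_def eigenvalue_def by auto
    have vc: "v \<in> carrier_vec n" and v0: "v \<noteq> 0\<^sub>v n" and Av: "A *\<^sub>v v = k \<cdot>\<^sub>v v"
      using v A unfolding eigenvector_def by auto
    define x where "x = (\<lambda>i. v $ i)"
    have "\<exists>i<n. v $ i \<noteq> 0"
    proof (rule ccontr)
      assume "\<not> ?thesis"
      then have "v = 0\<^sub>v n" using vc by (intro eq_vecI) auto
      with v0 show False by simp
    qed
    then obtain i0 where i0: "i0 < n" "x i0 \<noteq> 0" unfolding x_def by auto
    have "nsq n x > 0" unfolding nsq_def
    proof (rule sum_pos2[of _ i0])
      show "(x i0)^2 > 0" using i0 by simp
    qed (use i0 in auto)
    moreover have "\<forall>i<n. (\<Sum>j<n. a i j * x j) = k * x i"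
    proof (intro allI impI)
      fix i assume i: "i < n"
      have "(A *\<^sub>v v) $ i = (k \<cdot>\<^sub>v v) $ i" using Av by simp
      then show "(\<Sum>j<n. a i j * x j) = k * x i"
        using mat_vec_sum[OF A vc i] vc i unfolding a_def x_def by simp
    qed
    ultimately show ?thesis by blast
  qed
  have muEv: "\<mu> \<in> Ev"
  proof -
    define v where "v = vec n y"
    have vc: "v \<in> carrier_vec n" unfolding v_def by simp
    have "v \<noteq> 0\<^sub>v n"
    proof
      assume "v = 0\<^sub>v n"
      then have "\<forall>i<n. y i = 0" unfolding v_def by (metis index_vec index_zero_vec(1))
      then have "nsq n y = 0" unfolding nsq_def by simp
      with yn show False by simp
    qed
    moreover have "A *\<^sub>v v = \<mu> \<cdot>\<^sub>v v"
    proof (rule eq_vecI)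
      show "dim_vec (A *\<^sub>v v) = dim_vec (\<mu> \<cdot>\<^sub>v v)" using A vc by simp
      fix i assume "i < dim_vec (\<mu> \<cdot>\<^sub>v v)"
      then have i: "i < n" using vc by simp
      have "(A *\<^sub>v v) $ i = (\<Sum>j<n. a i j * y j)" using mat_vec_sum[OF A vc i] unfolding a_def v_def
        by simp
      also have "\<dots> = \<mu> * y i" using yeig i by simp
      finally show "(A *\<^sub>v v) $ i = (\<mu> \<cdot>\<^sub>v v) $ i" using i vc unfolding v_def by simp
    qed
    ultimately have "eigenvector A v \<mu>" unfolding eigenvector_def using vc A by auto
    then show ?thesis unfolding Ev_def eigenvalue_def by auto
  qed
  have muleast: "\<mu> \<le> k" if kE: "k \<in> Ev" for k
  proof -
    obtain x where xp: "nsq n x > 0" and xe: "\<forall>i<n. (\<Sum>j<n. a i j * x j) = k * x i"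
      using ev_vec[OF kE] by blast
    have "qf n a x x = k * nsq n x" using qf_eig[OF xe, where w=x] unfolding nsq_def
      by (simp add: power2_eq_square)
    with bnd have "\<mu> * nsq n x \<le> k * nsq n x" by metis
    with xp show ?thesis by simp
  qed
  have "lambda_min A = \<mu>" unfolding lambda_min_def Ev_def[symmetric]
    by (rule Min_eqI[OF fin muleast muEv])
  moreover have "lambda_max A \<in> Ev" unfolding lambda_max_def Ev_def[symmetric]
    using fin muEv by (intro Max_in) auto
  ultimately show ?thesis using bnd ev_vec unfolding a_def by auto
qed


theorem theorem4:
  fixes n :: nat and E :: "nat set set"
  assumes "hypergraph n E" and "E \<noteq> {}"
  shows "real (strong_chromatic_number n E)
           \<ge> 1 - lambda_max (hg_adj_matrix n E) / lambda_min (hg_adj_matrix n E)"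
proof -
  define A where "A = hg_adj_matrix n E"
  define a where "a = (\<lambda>i j. A $$ (i, j))"
  define \<mu> where "\<mu> = lambda_min A"
  define l where "l = lambda_max A"
  have hE: "\<And>e. e \<in> E \<Longrightarrow> e \<subseteq> {..<n} \<and> card e \<ge> 2" using assms(1) unfolding hypergraph_def by blast
  have fE: "finite E" by (rule finite_subset[of E "Pow {..<n}"]) (use hE in auto)
  obtain e0 where e0: "e0 \<in> E" using assms(2) by blast
  have fe0: "finite e0" using hE[OF e0] finite_subset by blast
  have "\<not> (\<forall>i\<in>e0. \<forall>j\<in>e0. i = j)"
  proof
    assume "\<forall>i\<in>e0. \<forall>j\<in>e0. i = j"
    then have "card e0 \<le> Suc 0" using card_le_Suc0_iff_eq[OF fe0] by blast
    with hE[OF e0] show False by simp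
  qed
  then obtain p q where pq: "p \<in> e0" "q \<in> e0" "p \<noteq> q" by blast
  have pn: "p < n" and qn: "q < n" using pq hE[OF e0] by auto
  then have n: "n > 0" by simp
  have Ac: "A \<in> carrier_mat n n" unfolding A_def hg_adj_matrix_def by simp
  have aij: "a i j = (if i = j then 0 else (\<Sum>e\<in>{e\<in>E. i \<in> e \<and> j \<in> e}. 1 / (real (card e) - 1)))"
    if "i < n" "j < n" for i j
    using that unfolding a_def A_def hg_adj_matrix_def by simp
  have sym: "a i j = a j i" if "i < n" "j < n" for i j
  proof -
    have "{e\<in>E. i \<in> e \<and> j \<in> e} = {e\<in>E. j \<in> e \<and> i \<in> e}" by auto
    then show ?thesis using aij[OF that] aij[of j i] that by auto
  qed
  have symA: "\<forall>i<n. \<forall>j<n. A $$ (i, j) = A $$ (j, i)"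
    using sym unfolding a_def by blast
  have sf: "(\<forall>z. qf n (\<lambda>i j. A $$ (i, j)) z z \<ge> lambda_min A * nsq n z)
     \<and> (\<exists>x. nsq n x > 0 \<and> (\<forall>i<n. (\<Sum>j<n. A $$ (i, j) * x j) = lambda_max A * x i))"
    by (rule spectral_facts[OF Ac n symA])
  have bnd: "\<And>z. qf n a z z \<ge> \<mu> * nsq n z" using sf unfolding a_def \<mu>_def by blast
  obtain x where X: "nsq n x > 0" and xe: "\<forall>i<n. (\<Sum>j<n. a i j * x j) = l * x i"
    using sf unfolding a_def l_def by blast
  have apq: "a p q > 0"
  proof -
    have "a p q = (\<Sum>e\<in>{e\<in>E. p \<in> e \<and> q \<in> e}. 1 / (real (card e) - 1))"
      using aij[OF pn qn] pq by simp
    also have "\<dots> > 0"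
    proof (rule sum_pos)
      show "finite {e\<in>E. p \<in> e \<and> q \<in> e}" using fE by simp
      show "{e\<in>E. p \<in> e \<and> q \<in> e} \<noteq> {}" using e0 pq by auto
      fix e assume "e \<in> {e\<in>E. p \<in> e \<and> q \<in> e}"
      then have "card e \<ge> 2" using hE by auto
      then have "real (card e) - 1 > 0" by linarith
      then show "1 / (real (card e) - 1) > 0" by simp
    qed
    finally show ?thesis .
  qed
  have mu_neg: "\<mu> < 0"
  proof -
    define u where "u = (\<lambda>i. if i = p then 1 else 0::real)"
    define v where "v = (\<lambda>i. if i = q then 1 else 0::real)"
    have "qf n a (\<lambda>i. u i + (-1) * v i) (\<lambda>i. u i + (-1) * v i) = a p p + (-1) * (a p q + a q p) + (-1)^2 * a q q"
      unfolding qf_expand u_def v_def using qf_delta pn qn by simp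
    also have "\<dots> = - 2 * a p q" using aij[OF pn pn] aij[OF qn qn] sym[OF pn qn] by simp
    finally have q1: "qf n a (\<lambda>i. u i + (-1) * v i) (\<lambda>i. u i + (-1) * v i) = - 2 * a p q" .
    have nu: "nsq n u = 1"
    proof -
      have "nsq n u = (\<Sum>i<n. if i = p then 1 else 0)"
        unfolding nsq_def u_def by (intro sum.cong refl) auto
      then show ?thesis using pn by simp
    qed
    have nv: "nsq n v = 1"
    proof -
      have "nsq n v = (\<Sum>i<n. if i = q then 1 else 0)"
        unfolding nsq_def v_def by (intro sum.cong refl) auto
      then show ?thesis using qn by simp
    qed
    have uv: "(\<Sum>i<n. u i * v i) = 0" unfolding u_def v_def using pq(3) by (intro sum.neutral) auto
    have "nsq n (\<lambda>i. u i + (-1) * v i) = 2" unfolding nsq_expand nu nv uv by simp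
    with q1 bnd[of "\<lambda>i. u i + (-1) * v i"] have "\<mu> * 2 \<le> - 2 * a p q" by simp
    with apq show ?thesis by simp
  qed
  define \<gamma> where "\<gamma> = strong_chromatic_number n E"
  have "\<exists>k. \<exists>c :: nat \<Rightarrow> nat. (\<forall>i<n. c i < k) \<and> (\<forall>i<n. \<forall>j<n. hg_adjacent E i j \<longrightarrow> c i \<noteq> c j)"
    by (rule exI[of _ n], rule exI[of _ id]) (auto simp: hg_adjacent_def)
  from LeastI_ex[OF this] obtain c :: "nat \<Rightarrow> nat" where cl: "\<forall>i<n. c i < \<gamma>"
    and cadj: "\<forall>i<n. \<forall>j<n. hg_adjacent E i j \<longrightarrow> c i \<noteq> c j"
    unfolding \<gamma>_def strong_chromatic_number_def by blast
  have indep: "a i j = 0" if "i < n" "j < n" "c i = c j" for i j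
  proof (cases "i = j")
    case True then show ?thesis using aij that by simp
  next
    case False
    then have "\<not> hg_adjacent E i j" using cadj that by blast
    then have emp: "{e\<in>E. i \<in> e \<and> j \<in> e} = {}" using False unfolding hg_adjacent_def by auto
    have "a i j = (\<Sum>e\<in>{e\<in>E. i \<in> e \<and> j \<in> e}. 1 / (real (card e) - 1))"
      using aij[OF that(1,2)] False by simp
    also have "\<dots> = 0" unfolding emp by simp
    finally show ?thesis .
  qed
  define d where "d = (\<lambda>p. nsq n (\<lambda>i. if c i = p then x i else 0))"
  have each: "- \<mu> \<ge> (l - \<mu>) * d r / nsq n x" for r
  proof -
    define z where "z = (\<lambda>i. if c i = r then x i else 0)"
    have qz: "qf n a z z = 0" unfolding qf_def z_def
      by (intro sum.neutral ballI) (auto simp: indep)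
    have sz: "(\<Sum>i<n. z i * x i) = d r" unfolding d_def nsq_def z_def
      by (intro sum.cong refl) (auto simp: power2_eq_square)
    have "qf n a z z - \<mu> * nsq n z \<ge> (l - \<mu>) * (\<Sum>i<n. z i * x i)^2 / nsq n x"
      by (rule key_ineq[OF sym bnd xe X])
    then have ineq: "- \<mu> * d r \<ge> (l - \<mu>) * (d r)^2 / nsq n x"
      unfolding qz sz by (simp add: d_def z_def)
    have dnn: "d r \<ge> 0" unfolding d_def by (rule nsq_nonneg)
    show ?thesis
    proof (cases "d r = 0")
      case True then show ?thesis using mu_neg by simp
    next
      case False
      then have dp: "d r > 0" using dnn by simp
      have e1: "((l - \<mu>) * d r / nsq n x) * d r = (l - \<mu>) * (d r)^2 / nsq n x"
        by (simp add: power2_eq_square)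
      have "((l - \<mu>) * d r / nsq n x) * d r \<le> (- \<mu>) * d r"
        using ineq unfolding e1 by simp
      then show ?thesis using mult_le_cancel_right_pos[OF dp] by blast
    qed
  qed
  have dsum: "(\<Sum>r<\<gamma>. d r) = nsq n x"
  proof -
    have "(\<Sum>r<\<gamma>. d r) = (\<Sum>r<\<gamma>. \<Sum>i<n. if c i = r then (x i)^2 else 0)"
      unfolding d_def nsq_def by (intro sum.cong refl) auto
    also have "\<dots> = (\<Sum>i<n. \<Sum>r<\<gamma>. if c i = r then (x i)^2 else 0)" by (rule sum.swap)
    also have "\<dots> = (\<Sum>i<n. (x i)^2)" using cl by (intro sum.cong refl) (simp add: sum.delta')
    finally show ?thesis unfolding nsq_def .
  qed
  have "(\<Sum>r<\<gamma>. (l - \<mu>) * d r / nsq n x) \<le> (\<Sum>r<\<gamma>. - \<mu>)"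
    by (rule sum_mono) (rule each)
  moreover have "(\<Sum>r<\<gamma>. (l - \<mu>) * d r / nsq n x) = l - \<mu>"
    using dsum X by (simp add: sum_divide_distrib[symmetric] sum_distrib_left[symmetric])
  ultimately have main: "l - \<mu> \<le> - real \<gamma> * \<mu>" by simp
  have "1 - real \<gamma> \<le> l / \<mu>" using mu_neg main by (simp add: le_divide_eq algebra_simps)
  then show ?thesis unfolding \<gamma>_def A_def[symmetric] l_def[symmetric] \<mu>_def[symmetric] by simp
qed

end
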